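(* Fix $\varepsilon\in\{-1,1\}$. Let $P_0^{(0)},P_1^{(0)},P_2^{(0)}\in\mathbb H$ form a hyperbolic triangle, and for $k\ge1$ let $P_0^{(k)}P_1^{(k)}P_2^{(k)}$ be the Napoleonization (with sign $\varepsilon$) of $P_0^{(k-1)}P_1^{(k-1)}P_2^{(k-1)}$, where before each Napoleonization the vertices of the current triangle are labelled so that $\langle P_0\tilde\times P_1,P_2\rangle\ge0$. Then, as $k\to+\infty$, the triangles become more nearly equilateral and shrink to a point: for every $i\in\mathbb Z/3\mathbb Z$, $-\langle P^{(k)}_{i+1},P^{(k)}_{i+2}\rangle\to1$, i.e. the hyperbolic length $\operatorname{arccosh}(-\langle P^{(k)}_{i+1},P^{(k)}_{i+2}\rangle)$ of every side tends to $0$ (equivalently $\sqrt{1-2\langle P^{(k)}_{i+1},P^{(k)}_{i+2}\rangle}\to\sqrt3$).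
   Context: On $\mathbb R^3$ the Minkowski form is $\langle v,w\rangle=-v_1w_1+v_2w_2+v_3w_3$; $\mathbb H=\{P\in\mathbb R^3:\langle P,P\rangle=-1,\ P_1\ge1\}$, with distance $\operatorname{arccosh}(-\langle P,Q\rangle)$. The hyperbolic cross product is $v\tilde\times w:=J(v\times w)$ with $J=\mathrm{diag}(-1,1,1)$ and $\times$ the Euclidean cross product. The centroid of $A,B,C\in\mathbb H$ is $(A+B+C)/\sqrt{-\langle A+B+C,A+B+C\rangle}$. Napoleonization with sign $\varepsilon$ of a triangle $P_0P_1P_2$ (vertices labelled so that $\langle P_0\tilde\times P_1,P_2\rangle\ge0$): for $i\in\mathbb Z/3\mathbb Z$ let $Q_i=\frac{-\langle P_{i+1},P_{i+2}\rangle(P_{i+1}+P_{i+2})+\varepsilon\sqrt{1-2\langle P_{i+1},P_{i+2}\rangle}\,P_{i+1}\tilde\times P_{i+2}}{1-\langle P_{i+1},P_{i+2}\rangle}$ (so $P_{i+1}P_{i+2}Q_i$ is equilateral) and let $R_i$ be the centroid of $P_{i+1}P_{i+2}Q_i$, which equals $\frac{\sqrt{1-2\langle P_{i+1},P_{i+2}\rangle}(P_{i+1}+P_{i+2})+\varepsilon P_{i+1}\tilde\times P_{i+2}}{\sqrt3(1-\langle P_{i+1},P_{i+2}\rangle)}$; the Napoleonization is $R_0R_1R_2$. *)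

theory Defs
  imports "HOL-Analysis.Analysis" "HOL-Analysis.Cross3"
begin

definition mink :: "real^3 \<Rightarrow> real^3 \<Rightarrow> real" where
  "mink v w = - (v$1 * w$1) + v$2 * w$2 + v$3 * w$3"

definition hyp :: "(real^3) set" where
  "hyp = {P. mink P P = -1 \<and> P$1 \<ge> 1}"

definition hdist :: "real^3 \<Rightarrow> real^3 \<Rightarrow> real" where
  "hdist P Q = arcosh (- mink P Q)"

definition Jmap :: "real^3 \<Rightarrow> real^3" where
  "Jmap v = (\<chi> i. if i = 1 then - (v$i) else v$i)"

definition hcross :: "real^3 \<Rightarrow> real^3 \<Rightarrow> real^3" where
  "hcross v w = Jmap (cross3 v w)"

definition hcentroid :: "real^3 \<Rightarrow> real^3 \<Rightarrow> real^3 \<Rightarrow> real^3" where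
  "hcentroid A B C = (1 / sqrt (- mink (A + B + C) (A + B + C))) *\<^sub>R (A + B + C)"

text \<open>Apex Q of the equilateral triangle erected (sign eps) on the side P P'.\<close>
definition napQ :: "real \<Rightarrow> real^3 \<Rightarrow> real^3 \<Rightarrow> real^3" where
  "napQ eps P P' =
     (1 / (1 - mink P P')) *\<^sub>R
       ((- mink P P') *\<^sub>R (P + P') + (eps * sqrt (1 - 2 * mink P P')) *\<^sub>R hcross P P')"

definition napR :: "real \<Rightarrow> real^3 \<Rightarrow> real^3 \<Rightarrow> real^3" where
  "napR eps P P' = hcentroid P P' (napQ eps P P')"

text \<open>A hyperbolic triangle: three points of H not lying on a common geodesic
  (geodesics of H are its intersections with planes through the origin).\<close>
definition hyp_triangle :: "real^3 \<Rightarrow> real^3 \<Rightarrow> real^3 \<Rightarrow> bool" where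
  "hyp_triangle A B C \<longleftrightarrow> A \<in> hyp \<and> B \<in> hyp \<and> C \<in> hyp \<and>
     \<not> (\<exists>n::real^3. n \<noteq> 0 \<and> n \<bullet> A = 0 \<and> n \<bullet> B = 0 \<and> n \<bullet> C = 0)"

end

theory Submission
  imports Defs
begin


lemma three_neq: "(2::3) \<noteq> 1" "(3::3) \<noteq> 1" by simp_all

lemma Jmap_comp[simp]: "(Jmap v)$1 = - (v$1)" "(Jmap v)$2 = v$2" "(Jmap v)$3 = v$3"
  by (simp_all add: Jmap_def)

lemma hcross_comp[simp]:
  "(hcross x y)$1 = - (x$2 * y$3 - y$2 * x$3)"
  "(hcross x y)$2 = x$3 * y$1 - y$3 * x$1"
  "(hcross x y)$3 = x$1 * y$2 - y$1 * x$2"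
  by (simp_all add: hcross_def cross_components)

lemma mink_sym: "mink v w = mink w v" by (simp add: mink_def algebra_simps)
lemma mink_add_left[simp]: "mink (u + v) w = mink u w + mink v w" by (simp add: mink_def algebra_simps)
lemma mink_add_right[simp]: "mink w (u + v) = mink w u + mink w v" by (simp add: mink_def algebra_simps)
lemma mink_scale_left[simp]: "mink (c *\<^sub>R u) w = c * mink u w" by (simp add: mink_def algebra_simps)
lemma mink_scale_right[simp]: "mink w (c *\<^sub>R u) = c * mink w u" by (simp add: mink_def algebra_simps)
lemma mink_neg_left[simp]: "mink (- u) w = - mink u w" by (simp add: mink_def algebra_simps)

lemma mink_neg_right[simp]: "mink w (- u) = - mink w u" by (simp add: mink_def algebra_simps)
lemma mink_diff_left[simp]: "mink (u - v) w = mink u w - mink v w" by (simp add: mink_def algebra_simps)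
lemma mink_diff_right[simp]: "mink w (u - v) = mink w u - mink w v" by (simp add: mink_def algebra_simps)

lemma mink_hcross_self[simp]: "mink u (hcross u v) = 0" "mink v (hcross u v) = 0"
  "mink (hcross u v) u = 0" "mink (hcross u v) v = 0"
  by (simp_all add: mink_def algebra_simps)

lemma mink_hcross_cyc: "mink (hcross A B) C = mink (hcross B C) A"
  by (simp add: mink_def algebra_simps)

lemma mink_hcross_hcross: "mink (hcross u v) (hcross w z) = mink u z * mink v w - mink u w * mink v z"
  by (simp add: mink_def algebra_simps)

lemma gram: "(mink (hcross A B) C)^2 = - (mink A A * mink B B * mink C C + 2 * mink A B * mink B C * mink C A
   - mink A A * (mink B C)^2 - mink B B * (mink C A)^2 - mink C C * (mink A B)^2)"
  by (simp add: mink_def power2_eq_square algebra_simps)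



lemma hyp_D: "A \<in> hyp \<Longrightarrow> A$1^2 = 1 + A$2^2 + A$3^2 \<and> A$1 \<ge> 1"
  by (auto simp: hyp_def mink_def power2_eq_square)

lemma hyp_mink: "A \<in> hyp \<Longrightarrow> mink A A = -1" by (simp add: hyp_def)

lemma hyp_mink_ge1:
  assumes "A \<in> hyp" "B \<in> hyp" shows "- mink A B \<ge> 1"
proof -
  have a: "A$1^2 = 1 + A$2^2 + A$3^2" "A$1 \<ge> 1" using hyp_D[OF assms(1)] by auto
  have b: "B$1^2 = 1 + B$2^2 + B$3^2" "B$1 \<ge> 1" using hyp_D[OF assms(2)] by auto
  define p where "p = A$2*B$2 + A$3*B$3"
  have "p^2 \<le> (A$2^2 + A$3^2) * (B$2^2 + B$3^2)"
  proof -
    have "(A$2^2 + A$3^2) * (B$2^2 + B$3^2) - p^2 = (A$2*B$3 - A$3*B$2)^2"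
      by (simp add: p_def power2_eq_square algebra_simps)
    thus ?thesis by (metis diff_ge_0_iff_ge zero_le_power2)
  qed
  also have "\<dots> = (A$1^2 - 1) * (B$1^2 - 1)" using a b by simp
  also have "\<dots> \<le> (A$1*B$1 - 1)^2"
  proof -
    have "(A$1*B$1 - 1)^2 - (A$1^2 - 1) * (B$1^2 - 1) = (A$1 - B$1)^2"
      by (simp add: power2_eq_square algebra_simps)
    thus ?thesis by (metis diff_ge_0_iff_ge zero_le_power2)
  qed
  finally have "p^2 \<le> (A$1*B$1 - 1)^2" .
  moreover have "A$1*B$1 - 1 \<ge> 0" using a b by (metis diff_ge_0_iff_ge mult_mono' mult_1 zero_le_one)
  ultimately have "p \<le> A$1*B$1 - 1" using power2_le_imp_le by blast
  thus ?thesis by (simp add: mink_def p_def)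
qed

lemma sheet:
  assumes "mink R R = -1" "A \<in> hyp" "mink R A < 0" shows "R \<in> hyp"
proof (rule ccontr)
  assume n: "R \<notin> hyp"
  have r: "R$1^2 = 1 + R$2^2 + R$3^2" using assms(1) by (simp add: mink_def power2_eq_square)
  hence "R$1 < 1" using n assms(1) by (auto simp: hyp_def)
  have "R$1^2 \<ge> 1" using r by simp
  hence "\<not> \<bar>R$1\<bar> < 1" by (simp add: abs_square_less_1[symmetric])
  hence "R$1 \<le> -1" using \<open>R$1 < 1\<close> by linarith
  have "- R \<in> hyp" using assms(1) \<open>R$1 \<le> -1\<close> by (simp add: hyp_def mink_def)
  from hyp_mink_ge1[OF this assms(2)] have "mink R A \<ge> 1" by simp
  thus False using assms(3) by simp
qed

lemma sq_cancel: "y \<noteq> 0 \<Longrightarrow> (x/y)*(x/y)*(c*y^2) = c*(x^2::real)"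
  by (simp add: power2_eq_square field_simps)
lemma sq_cancel2: "y \<noteq> 0 \<Longrightarrow> (1/(sqrt 3 * y))*(1/(sqrt 3 * y))*(-3*y^2) = (-1::real)"
  by (simp add: power2_eq_square field_simps)

lemma V_sq:
  assumes "A \<in> hyp" "B \<in> hyp" "e = 1 \<or> e = -1"
  shows "mink (sqrt (1 - 2 * mink A B) *\<^sub>R (A + B) + e *\<^sub>R hcross A B)
               (sqrt (1 - 2 * mink A B) *\<^sub>R (A + B) + e *\<^sub>R hcross A B) = - 3 * (1 - mink A B)^2"
proof -
  have c: "- mink A B \<ge> 1" using hyp_mink_ge1 assms by blast
  have s: "(sqrt (1 - 2 * mink A B))^2 = 1 - 2 * mink A B" using c by simp
  have ee: "e * (e * y) = y" for y using assms(3) by auto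
  have X: "mink (hcross A B) (hcross A B) = (mink A B)^2 - 1"
    using hyp_mink[OF assms(1)] hyp_mink[OF assms(2)]
    by (simp add: mink_hcross_hcross mink_sym[of B A] power2_eq_square)
  have sym: "mink B A = mink A B" by (rule mink_sym)
  show ?thesis
    using hyp_mink[OF assms(1)] hyp_mink[OF assms(2)] X s assms(3)
    by (elim disjE; simp add: sym algebra_simps power2_eq_square mink_sym[of "hcross A B" A] mink_sym[of "hcross A B" B])
qed

lemma napR_formula:
  assumes "A \<in> hyp" "B \<in> hyp" "e = 1 \<or> e = -1"
  shows "napR e A B = (1 / (sqrt 3 * (1 - mink A B))) *\<^sub>R
            (sqrt (1 - 2 * mink A B) *\<^sub>R (A + B) + e *\<^sub>R hcross A B)"
proof -
  define m where "m = mink A B"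
  define s where "s = sqrt (1 - 2 * m)"
  define V where "V = s *\<^sub>R (A + B) + e *\<^sub>R hcross A B"
  have c: "- m \<ge> 1" using hyp_mink_ge1 assms m_def by blast
  have s2: "s^2 = 1 - 2*m" using c by (simp add: s_def)
  have spos: "s > 0" using c by (simp add: s_def)
  have m1: "1 - m > 0" using c by simp
  have VV: "mink V V = -3 * (1 - m)^2" unfolding V_def s_def m_def by (rule V_sq[OF assms])
  have S: "A + B + napQ e A B = (s / (1 - m)) *\<^sub>R V"
  proof -
    have "A + B + napQ e A B = (1 + (- m) / (1 - m)) *\<^sub>R (A + B) + (e * s / (1 - m)) *\<^sub>R hcross A B"
      by (simp add: napQ_def m_def s_def scaleR_add_right scaleR_add_left algebra_simps)
    also have "1 + (- m) / (1 - m) = s * s / (1 - m)" using m1 s2 by (simp add: field_simps power2_eq_square)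
    finally show ?thesis by (simp add: V_def scaleR_add_right algebra_simps)
  qed
  have "- mink (A + B + napQ e A B) (A + B + napQ e A B) = 3 * s^2"
  proof -
    have nz: "1 - m \<noteq> 0" using m1 by simp
    have "mink (A + B + napQ e A B) (A + B + napQ e A B) = (s / (1 - m)) * (s / (1 - m)) * (-3 * (1 - m)^2)"
      by (simp only: S mink_scale_left mink_scale_right VV)
    also have "\<dots> = - 3 * s^2" using nz by (rule sq_cancel)
    finally show ?thesis by simp
  qed
  hence sq: "sqrt (- mink (A + B + napQ e A B) (A + B + napQ e A B)) = sqrt 3 * s"
    using spos by (simp add: real_sqrt_mult)
  have "napR e A B = (1 / sqrt (- mink (A + B + napQ e A B) (A + B + napQ e A B))) *\<^sub>R (A + B + napQ e A B)"
    by (simp add: napR_def hcentroid_def)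
  also have "\<dots> = (1 / (sqrt 3 * s)) *\<^sub>R ((s / (1 - m)) *\<^sub>R V)"
    unfolding sq by (simp only: S)
  also have "\<dots> = (1 / (sqrt 3 * (1 - m))) *\<^sub>R V" using spos m1 by simp
  finally show ?thesis by (simp add: V_def s_def m_def)
qed

lemma napR_hyp:
  assumes "A \<in> hyp" "B \<in> hyp" "e = 1 \<or> e = -1"
  shows "napR e A B \<in> hyp"
proof -
  define m where "m = mink A B"
  define V where "V = sqrt (1 - 2 * m) *\<^sub>R (A + B) + e *\<^sub>R hcross A B"
  have c: "- m \<ge> 1" using hyp_mink_ge1 assms m_def by blast
  have m1: "1 - m > 0" using c by simp
  have R: "napR e A B = (1 / (sqrt 3 * (1 - m))) *\<^sub>R V"
    using napR_formula[OF assms] by (simp add: V_def m_def)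
  have VV: "mink V V = -3 * (1 - m)^2" unfolding V_def m_def by (rule V_sq[OF assms])
  have "mink (napR e A B) (napR e A B) = -1"
  proof -
    have nz: "1 - m \<noteq> 0" using m1 by simp
    have "mink (napR e A B) (napR e A B) = (1 / (sqrt 3 * (1 - m))) * (1 / (sqrt 3 * (1 - m))) * (-3 * (1 - m)^2)"
      by (simp only: R mink_scale_left mink_scale_right VV)
    also have "\<dots> = -1" using nz by (rule sq_cancel2)
    finally show ?thesis .
  qed
  moreover have "mink (napR e A B) A < 0"
  proof -
    have "mink V A = sqrt (1 - 2 * m) * (-1 + m)"
      using hyp_mink[OF assms(1)] by (simp add: V_def mink_sym[of B A] m_def mink_sym[of "hcross A B" A])
    moreover have "sqrt (1 - 2*m) > 0" using c by simp
    ultimately have "mink V A < 0" using m1 by (simp add: mult_pos_neg)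
    moreover have "sqrt 3 * (1-m) > 0" using m1 by simp
    ultimately show ?thesis by (simp add: R divide_neg_pos)
  qed
  ultimately show ?thesis using sheet assms(1) by blast
qed



lemma poly_cert:
  fixes a b c M :: real
  assumes "1 \<le> a" "1 \<le> b" "1 \<le> c" "a \<le> M" "b \<le> M" "c \<le> M"
  shows "(M+1)*(M-1)*((1+b+c)*(1+a+b+c) + (M-1)*(1+b+c) + b*c - a) + (M+1)*(1+2*a*b*c-a^2-b^2-c^2)
         \<le> 3*(1+b)*(1+c)*(M-1)*(M*(M+1) - (M-1)^2/4)"
proof -
  define m where "m = M - 1"
  define y0 where "y0 = M - a"
  define y1 where "y1 = M - b"
  define y2 where "y2 = M - c"
  have m: "m \<ge> 0" "y0 \<ge> 0" "y1 \<ge> 0" "y2 \<ge> 0" "m - y0 \<ge> 0" "m - y1 \<ge> 0" "m - y2 \<ge> 0"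
    using assms by (auto simp: m_def y0_def y1_def y2_def)
  define cert where "cert =
   (2*y2*y2 + 4*y1*(m-y2) + 2*y1*y1 + 4*y0*(m-y1) + 2*y0*y0 + 8*m*y2 + 4*m*y1 + 4*y0*(m-y2))
 + (4*y0*y1*y2 + m*y2*(m-y2) + 2*m*y2*(m-y0) + m*y1*(m-y1) + 2*m*m*(m-y0) + 8*m*y0*(m-y1) + m*y0*y0 + m*m*y2 + 6*m*y1*(m-y2) + 6*m*y0*(m-y2) + 3*m*m*(m-y1))
 + (m*m*y2*(m-y2) + m*m*y1*(m-y1) + 2*m*y0*(m-y1)*(m-y2) + m*m*y0*(m-y1) + 4*m*m*(m-y1)*(m-y2) + 3/2*m*m*m*(m-y1) + m*m*y0*(m-y2) + 3/2*m*m*m*(m-y2))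
 + 9/4*m*m*m*(m-y1)*(m-y2)"
  have "cert \<ge> 0" unfolding cert_def using m
    by (intro add_nonneg_nonneg mult_nonneg_nonneg; simp)
  moreover have "3*(1+b)*(1+c)*(M-1)*(M*(M+1) - (M-1)^2/4) -
      ((M+1)*(M-1)*((1+b+c)*(1+a+b+c) + (M-1)*(1+b+c) + b*c - a) + (M+1)*(1+2*a*b*c-a^2-b^2-c^2)) = cert"
    unfolding cert_def m_def y0_def y1_def y2_def by (simp add: field_simps power2_eq_square)
  ultimately show ?thesis by linarith
qed

lemma main_ineq:
  fixes a b c D M e :: real
  assumes "1 \<le> a" "1 \<le> b" "1 \<le> c" "a \<le> M" "b \<le> M" "c \<le> M" "M > 1" "D \<ge> 0"
    and D2: "D^2 = 1 + 2*a*b*c - a^2 - b^2 - c^2" and e: "e = 1 \<or> e = -1"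
  shows "(sqrt (1+2*b) * sqrt (1+2*c) * (1+a+b+c) - e*D*(sqrt (1+2*b) + sqrt (1+2*c)) + b*c - a)
          / (3*(1+b)*(1+c)) \<le> M - (M-1)^2/(4*(M+1))"
proof -
  define u where "u = sqrt (1+2*b)"
  define v where "v = sqrt (1+2*c)"
  have u: "u \<ge> 0" "u^2 = 1+2*b" using assms by (auto simp: u_def)
  have v: "v \<ge> 0" "v^2 = 1+2*c" using assms by (auto simp: v_def)
  have uv0: "u + v \<ge> 0" using u v by simp
  have 1: "- e*D*(u+v) \<le> D*(u+v)" using e \<open>D \<ge> 0\<close> uv0 by auto
  have 2: "u * v \<le> 1+b+c"
  proof -
    have "0 \<le> (u-v)^2" by simp
    thus ?thesis using u v by (simp add: power2_eq_square algebra_simps)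
  qed
  have "(u+v)^2 \<le> 4*(1+b+c)"
  proof -
    have "0 \<le> (u-v)^2" by simp
    thus ?thesis using u v by (simp add: power2_eq_square algebra_simps)
  qed
  have 3: "D*(u+v) \<le> (M-1)*(1+b+c) + D^2/(M-1)"
  proof -
    have m: "M - 1 > 0" using assms by simp
    have "0 \<le> ((M-1)*(u+v)/2 - D)^2" by simp
    hence "(M-1)*(D*(u+v)) \<le> (M-1)*((M-1)*(u+v)^2/4) + D^2"
      by (simp add: power2_eq_square algebra_simps)
    also have "\<dots> \<le> (M-1)*((M-1)*(1+b+c)) + D^2"
      using \<open>(u+v)^2 \<le> 4*(1+b+c)\<close> m by (simp add: mult_left_mono)
    moreover have "(M-1)*((M-1)*(1+b+c) + D^2/(M-1)) = (M-1)*((M-1)*(1+b+c)) + D^2"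
      using m by (simp add: distrib_left)
    ultimately have "(M-1)*(D*(u+v)) \<le> (M-1)*((M-1)*(1+b+c) + D^2/(M-1))"
      by linarith
    thus ?thesis using m by simp
  qed
  have s0: "1+a+b+c \<ge> 0" using assms by simp
  have N: "u * v *(1+a+b+c) - e*D*(u+v) + b*c - a \<le> (1+b+c)*(1+a+b+c) + (M-1)*(1+b+c) + D^2/(M-1) + b*c - a"
    using 1 3 mult_right_mono[OF 2 s0] by linarith
  have den: "3*(1+b)*(1+c) > 0" using assms by simp
  have m: "M - 1 > 0" "M + 1 > 0" using assms by auto
  have P: "(M+1)*(M-1)*((1+b+c)*(1+a+b+c) + (M-1)*(1+b+c) + b*c - a) + (M+1)*(1+2*a*b*c-a^2-b^2-c^2)
         \<le> 3*(1+b)*(1+c)*(M-1)*(M*(M+1) - (M-1)^2/4)"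
    by (rule poly_cert) (use assms in auto)
  have "(M+1)*(M-1)*((1+b+c)*(1+a+b+c) + (M-1)*(1+b+c) + D^2/(M-1) + b*c - a)
      = (M+1)*(M-1)*((1+b+c)*(1+a+b+c) + (M-1)*(1+b+c) + b*c - a) + (M+1)*D^2"
    using m by (simp add: field_simps)
  also have "\<dots> \<le> (M+1)*(M-1)*((3*(1+b)*(1+c)) * (M - (M-1)^2/(4*(M+1))))"
  proof -
    have "(M+1)*(M-1)*((3*(1+b)*(1+c)) * (M - (M-1)^2/(4*(M+1)))) = 3*(1+b)*(1+c)*(M-1)*(M*(M+1) - (M-1)^2/4)"
      using m by (simp add: field_simps)
    thus ?thesis using P unfolding D2 by linarith
  qed
  finally have "(1+b+c)*(1+a+b+c) + (M-1)*(1+b+c) + D^2/(M-1) + b*c - a \<le> (3*(1+b)*(1+c)) * (M - (M-1)^2/(4*(M+1)))"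
    using m by (simp add: mult_le_cancel_left_pos)
  with N have "u * v *(1+a+b+c) - e*D*(u+v) + b*c - a \<le> (3*(1+b)*(1+c)) * (M - (M-1)^2/(4*(M+1)))"
    by linarith
  thus ?thesis using den unfolding u_def v_def by (simp add: divide_le_eq mult.commute)
qed



lemma step_formula:
  assumes A: "A \<in> hyp" and B: "B \<in> hyp" and C: "C \<in> hyp" and e: "e = 1 \<or> e = -1"
  defines "a \<equiv> - mink B C" and "b \<equiv> - mink C A" and "c \<equiv> - mink A B" and "D \<equiv> mink (hcross A B) C"
  shows "- mink (napR e C A) (napR e A B) =
    (sqrt (1+2*b) * sqrt (1+2*c) * (1+a+b+c) - e*D*(sqrt (1+2*b) + sqrt (1+2*c)) + b*c - a) / (3*(1+b)*(1+c))"
proof -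
  define u where "u = sqrt (1+2*b)"
  define v where "v = sqrt (1+2*c)"
  have b1: "b \<ge> 1" unfolding b_def using hyp_mink_ge1[OF C A] .
  have c1: "c \<ge> 1" unfolding c_def using hyp_mink_ge1[OF A B] .
  have R1: "napR e C A = (1 / (sqrt 3 * (1 + b))) *\<^sub>R (u *\<^sub>R (C + A) + e *\<^sub>R hcross C A)"
    using napR_formula[OF C A e] by (simp add: u_def b_def)
  have R2: "napR e A B = (1 / (sqrt 3 * (1 + c))) *\<^sub>R (v *\<^sub>R (A + B) + e *\<^sub>R hcross A B)"
    using napR_formula[OF A B e] by (simp add: v_def c_def)
  have f1: "mink C (hcross A B) = D" by (simp add: D_def mink_sym)
  have f2: "mink (hcross C A) B = D" by (simp add: D_def mink_hcross_cyc[of C A B])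
  have f3: "mink (hcross C A) (hcross A B) = a - b*c"
    using hyp_mink[OF A] by (simp add: mink_hcross_hcross a_def b_def c_def mink_sym[of C B])
  have ee: "e * e = 1" using e by auto
  have VV: "mink (u *\<^sub>R (C + A) + e *\<^sub>R hcross C A) (v *\<^sub>R (A + B) + e *\<^sub>R hcross A B)
      = - (u * v * (1+a+b+c)) + e * u * D + e * v * D + (a - b*c)"
  proof -
    have "mink (u *\<^sub>R (C + A) + e *\<^sub>R hcross C A) (v *\<^sub>R (A + B) + e *\<^sub>R hcross A B)
      = u * v * (mink C A + mink C B + mink A A + mink A B) + u * e * mink C (hcross A B)
        + e * v * mink (hcross C A) B + (e*e)*mink (hcross C A) (hcross A B)"
      by (simp add: algebra_simps)
    also have "\<dots> = - (u * v * (1+a+b+c)) + e * u * D + e * v * D + (a - b*c)"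
      unfolding f1 f2 f3 ee using hyp_mink[OF A]
      by (simp add: a_def b_def c_def mink_sym[of C B] algebra_simps)
    finally show ?thesis .
  qed
  have s3: "sqrt 3 * sqrt 3 = (3::real)" by simp
  have "- mink (napR e C A) (napR e A B) =
     - ((1 / (sqrt 3 * (1 + b))) * (1 / (sqrt 3 * (1 + c))) * (- (u * v * (1+a+b+c)) + e * u * D + e * v * D + (a - b*c)))"
    unfolding R1 R2 mink_scale_left mink_scale_right VV by (simp only: mult_ac)
  also have "\<dots> = (u * v * (1+a+b+c) - e*D*(u + v) + b*c - a) / (3*(1+b)*(1+c))"
    using b1 c1 s3 by (simp add: field_simps minus_divide_left)
  finally show ?thesis by (simp add: u_def v_def)
qed



lemma step_bound:
  assumes A: "A \<in> hyp" and B: "B \<in> hyp" and C: "C \<in> hyp" and e: "e = 1 \<or> e = -1"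
    and D: "mink (hcross A B) C \<ge> 0"
    and Ma: "- mink B C \<le> M" and Mb: "- mink C A \<le> M" and Mc: "- mink A B \<le> M"
  shows "- mink (napR e C A) (napR e A B) \<le> M - (M-1)^2/(4*(M+1))"
proof -
  define a where "a = - mink B C"
  define b where "b = - mink C A"
  define c where "c = - mink A B"
  define d where "d = mink (hcross A B) C"
  have a1: "a \<ge> 1" unfolding a_def using hyp_mink_ge1[OF B C] .
  have b1: "b \<ge> 1" unfolding b_def using hyp_mink_ge1[OF C A] .
  have c1: "c \<ge> 1" unfolding c_def using hyp_mink_ge1[OF A B] .
  have d2: "d^2 = 1 + 2*a*b*c - a^2 - b^2 - c^2"
    unfolding d_def gram using hyp_mink[OF A] hyp_mink[OF B] hyp_mink[OF C]
    by (simp add: a_def b_def c_def power2_eq_square algebra_simps)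
  have F: "- mink (napR e C A) (napR e A B) =
    (sqrt (1+2*b) * sqrt (1+2*c) * (1+a+b+c) - e*d*(sqrt (1+2*b) + sqrt (1+2*c)) + b*c - a) / (3*(1+b)*(1+c))"
    unfolding a_def b_def c_def d_def by (rule step_formula[OF A B C e])
  show ?thesis
  proof (cases "M > 1")
    case True
    show ?thesis unfolding F
      by (rule main_ineq) (use a1 b1 c1 Ma Mb Mc True D d2 e in \<open>auto simp: a_def b_def c_def d_def\<close>)
  next
    case False
    hence "a = 1" "b = 1" "c = 1" using a1 b1 c1 Ma Mb Mc by (auto simp: a_def b_def c_def)
    hence "d = 0" using d2 by simp
    have M1: "M = 1" using False \<open>a = 1\<close> Ma a_def by simp
    have "sqrt (3::real) * sqrt 3 = 3" by simp
    thus ?thesis unfolding F using \<open>a = 1\<close> \<open>b = 1\<close> \<open>c = 1\<close> \<open>d = 0\<close> M1 by simp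
  qed
qed

lemma conv_lemma:
  fixes X :: "nat \<Rightarrow> real"
  assumes ge: "\<And>k. X k \<ge> 1" and st: "\<And>k. X (Suc k) \<le> X k - (X k - 1)^2/(4*(X k + 1))"
  shows "X \<longlonglongrightarrow> 1"
proof -
  have "decseq X"
  proof (rule decseq_SucI)
    fix k
    have "(X k - 1)^2/(4*(X k + 1)) \<ge> 0" using ge[of k] by simp
    thus "X (Suc k) \<le> X k" using st[of k] by linarith
  qed
  then obtain L where L: "X \<longlonglongrightarrow> L" "\<forall>i. L \<le> X i"
    using decseq_convergent[of X 1] ge by blast
  have L1: "L \<ge> 1" using L(1) ge by (meson LIMSEQ_le_const)
  have "(\<lambda>k. X (Suc k)) \<longlonglongrightarrow> L" using LIMSEQ_Suc[OF L(1)] .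
  moreover have "(\<lambda>k. X k - (X k - 1)^2/(4*(X k + 1))) \<longlonglongrightarrow> L - (L - 1)^2/(4*(L + 1))"
    using L1 by (intro tendsto_intros L(1)) auto
  ultimately have "L \<le> L - (L - 1)^2/(4*(L + 1))"
    using st by (intro LIMSEQ_le) auto
  hence "(L - 1)^2/(4*(L + 1)) \<le> 0" by simp
  moreover have "4*(L+1) > 0" using L1 by simp
  ultimately have "(L - 1)^2 \<le> 0" by (simp add: divide_le_0_iff)
  hence "L = 1" by simp
  thus ?thesis using L(1) by simp
qed

theorem theorem1p2:
  fixes eps :: real and P :: "nat \<Rightarrow> nat \<Rightarrow> real^3" and \<sigma> :: "nat \<Rightarrow> nat \<Rightarrow> nat"
  assumes eps: "eps = 1 \<or> eps = -1"
    and tri: "hyp_triangle (P 0 0) (P 0 1) (P 0 2)"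
    and perm: "\<And>k. \<sigma> k permutes {0, 1, 2}"
    and orient: "\<And>k. mink (hcross (P k (\<sigma> k 0)) (P k (\<sigma> k 1))) (P k (\<sigma> k 2)) \<ge> 0"
    and step: "\<And>k i. i < 3 \<Longrightarrow>
      P (Suc k) i = napR eps (P k (\<sigma> k ((i + 1) mod 3))) (P k (\<sigma> k ((i + 2) mod 3)))"
  shows "\<forall>i < 3. ((\<lambda>k. - mink (P k ((i + 1) mod 3)) (P k ((i + 2) mod 3))) \<longlongrightarrow> 1) sequentially"
proof -
  have sig: "\<sigma> k j < 3" if "j < 3" for k j
  proof -
    have "j \<in> {0,1,2}" using that by auto
    hence "\<sigma> k j \<in> {0,1,2}" by (rule iffD2[OF permutes_in_image[OF perm[of k]]])
    thus ?thesis by auto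
  qed
  have siginj: "\<sigma> k x \<noteq> \<sigma> k y" if "x \<noteq> y" for k x y
    using permutes_inj[OF perm[of k]] that by (meson injD)
  have H: "\<forall>i<3. P k i \<in> hyp" for k
  proof (induction k)
    case 0
    show ?case
    proof (intro allI impI)
      fix i :: nat assume "i < 3"
      hence "i = 0 \<or> i = 1 \<or> i = 2" by auto
      thus "P 0 i \<in> hyp" using tri unfolding hyp_triangle_def by auto
    qed
  next
    case (Suc k)
    show ?case
    proof (intro allI impI)
      fix i :: nat assume i: "i < 3"
      have "\<sigma> k ((i + 1) mod 3) < 3" "\<sigma> k ((i + 2) mod 3) < 3" by (simp_all add: sig)
      thus "P (Suc k) i \<in> hyp" using step[OF i] Suc napR_hyp eps by simp
    qed
  qed
  define a where "a k i = - mink (P k ((i + 1) mod 3)) (P k ((i + 2) mod 3))" for k i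
  define X where "X k = max (a k 0) (max (a k 1) (a k 2))" for k
  have a1: "a k i \<ge> 1" for k i
  proof -
    have "(i + 1) mod 3 < 3" "(i + 2) mod 3 < 3" by auto
    thus ?thesis unfolding a_def using H hyp_mink_ge1 by blast
  qed
  have aX: "a k i \<le> X k" if "i < 3" for k i
  proof -
    have "i = 0 \<or> i = 1 \<or> i = 2" using that by auto
    thus ?thesis by (auto simp: X_def)
  qed
  have X1: "X k \<ge> 1" for k using a1[of k 0] by (simp add: X_def)
  have pair: "- mink (P k p) (P k q) \<le> X k" if "p < 3" "q < 3" "p \<noteq> q" for k p q
  proof -
    have "p \<in> {0,1,2}" "q \<in> {0,1,2}" using that by auto
    hence "(p = 1 \<and> q = 2) \<or> (p = 2 \<and> q = 1) \<or> (p = 2 \<and> q = 0) \<or> (p = 0 \<and> q = 2) \<or>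
           (p = 0 \<and> q = 1) \<or> (p = 1 \<and> q = 0)" using that by auto
    thus ?thesis using aX[of 0 k] aX[of 1 k] aX[of 2 k]
      by (auto simp: a_def mink_sym numeral_2_eq_2)
  qed
  have Xstep: "X (Suc k) \<le> X k - (X k - 1)^2/(4*(X k + 1))" for k
  proof -
    define Q where "Q j = P k (\<sigma> k j)" for j
    have Q: "Q 0 \<in> hyp" "Q 1 \<in> hyp" "Q 2 \<in> hyp" using H sig by (auto simp: Q_def)
    have QX: "- mink (Q x) (Q y) \<le> X k" if "x < 3" "y < 3" "x \<noteq> y" for x y
      unfolding Q_def using pair sig siginj that by blast
    have P0: "P (Suc k) 0 = napR eps (Q 1) (Q 2)" using step[of 0 k] by (simp add: Q_def numeral_2_eq_2)
    have P1: "P (Suc k) 1 = napR eps (Q 2) (Q 0)" using step[of 1 k] by (simp add: Q_def numeral_2_eq_2)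
    have P2: "P (Suc k) 2 = napR eps (Q 0) (Q 1)" using step[of 2 k] by (simp add: Q_def numeral_2_eq_2)
    have D0: "mink (hcross (Q 0) (Q 1)) (Q 2) \<ge> 0" using orient[of k] by (simp add: Q_def)
    have D1: "mink (hcross (Q 1) (Q 2)) (Q 0) \<ge> 0" using D0 by (simp add: mink_hcross_cyc)
    have D2: "mink (hcross (Q 2) (Q 0)) (Q 1) \<ge> 0" using D1 by (simp add: mink_hcross_cyc)
    have "a (Suc k) 0 \<le> X k - (X k - 1)^2/(4*(X k + 1))"
      proof -
      have "a (Suc k) 0 = - mink (P (Suc k) 1) (P (Suc k) 2)" by (simp add: a_def numeral_2_eq_2)
      also have "\<dots> \<le> X k - (X k - 1)^2/(4*(X k + 1))" unfolding P1 P2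
        by (rule step_bound[OF Q(1) Q(2) Q(3) eps D0 QX QX QX]) simp_all
      finally show ?thesis .
    qed
    moreover have "a (Suc k) 1 \<le> X k - (X k - 1)^2/(4*(X k + 1))"
      proof -
      have "a (Suc k) 1 = - mink (P (Suc k) 2) (P (Suc k) 0)" by (simp add: a_def numeral_2_eq_2)
      also have "\<dots> \<le> X k - (X k - 1)^2/(4*(X k + 1))" unfolding P2 P0
        by (rule step_bound[OF Q(2) Q(3) Q(1) eps D1 QX QX QX]) simp_all
      finally show ?thesis .
    qed
    moreover have "a (Suc k) 2 \<le> X k - (X k - 1)^2/(4*(X k + 1))"
      proof -
      have "a (Suc k) 2 = - mink (P (Suc k) 0) (P (Suc k) 1)" by (simp add: a_def numeral_2_eq_2)
      also have "\<dots> \<le> X k - (X k - 1)^2/(4*(X k + 1))" unfolding P0 P1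
        by (rule step_bound[OF Q(3) Q(1) Q(2) eps D2 QX QX QX]) simp_all
      finally show ?thesis .
    qed
    ultimately show ?thesis by (simp add: X_def)
  qed
  have XL: "X \<longlonglongrightarrow> 1" using conv_lemma[of X] X1 Xstep by blast
  show ?thesis
  proof (intro allI impI)
    fix i :: nat assume i: "i < 3"
    have "(\<lambda>k. a k i) \<longlonglongrightarrow> 1"
      by (rule tendsto_sandwich[of "\<lambda>_. 1" _ _ X]) (use a1 aX[OF i] XL in auto)
    thus "((\<lambda>k. - mink (P k ((i + 1) mod 3)) (P k ((i + 2) mod 3))) \<longlongrightarrow> 1) sequentially"
      by (simp add: a_def)
  qed
qed


end
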